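(* Let $\mathbf{F}$ be a field of characteristic $3$ and let $m,g\in\mathbf{N}_0$ with $B(m,g)\not\equiv0\pmod 3$. For every $u\in\mathbf{N}_0$, the element $(e_{m,g})_{\le u}$ is an idempotent in $S_\mathbf{F}((m+3^{u+1}-1,\,3^{u+1}-1))$.
   Context: For a partition $\lambda=(\lambda_1,\lambda_2)$ with $m=\lambda_1-\lambda_2$, $S_\mathbf{F}(\lambda)=\operatorname{End}_{\mathbf{F}S_r}(M^\lambda)$ ($M^\lambda$ the permutation module on cosets of $S_{\lambda_1}\times S_{\lambda_2}$) is a commutative $\mathbf{F}$-algebra with basis $b(0)=\mathbf{1},b(1),\dots,b(\lambda_2)$ and multiplication $b(i)b(j)=\sum_{h=\max\{i,j\}}^{i+j}\binom{h}{i}\binom{h}{j}\binom{m+i+j}{i+j-h}b(h)$, with the convention $b(a)=0$ for $a>\lambda_2$. $B(m,g)=\binom{m+2g}{g}$. With base-3 digits $(m+2g)_u$, $g_u$, define $I^{(0)}=\{u: g_u=0,(m+2g)_u=0\}$, $J^{(0)}=\{u:g_u=1,(m+2g)_u=2\}$, $I^{(1)}=\{u:g_u=0,(m+2g)_u=1\}$, $J^{(1)}=\{u:g_u=2,(m+2g)_u=2\}$, $I^{(2)}=\{u:g_u=0,(m+2g)_u=2\}$, $J^{(2)}=\{u:g_u=1,(m+2g)_u=1\}$. Define $(e_{m,g})_{\le t}$ as \[\prod_{u\in I^{(0)},u\le t}(\mathbf{1}+b(3^u)-b(2\cdot3^u))\prod_{u\in J^{(0)},u\le t}(b(2\cdot3^u)-b(3^u))\prod_{u\in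 I^{(1)},u\le t}(\mathbf{1}-b(2\cdot3^u))\prod_{u\in J^{(1)},u\le t}b(2\cdot3^u)\prod_{u\in I^{(2)},u\le t}(\mathbf{1}-b(3^u)+b(2\cdot3^u))\prod_{u\in J^{(2)},u\le t}(b(3^u)-b(2\cdot3^u)),\] and $(e_{m,g})_{<t}$ analogously with $u<t$ (so $(e_{m,g})_{<0}=\mathbf{1}$). *)

theory Defs
  imports Main
begin

text \<open>The Schur-type algebra S_F(lambda) for lambda = (lambda1, lambda2), m = lambda1 - lambda2,
  n = lambda2.  Elements are coefficient functions c :: nat => 'a w.r.t. the basis
  b(0),...,b(n); coefficients at indices > n are zero.\<close>

definition sconst :: "nat \<Rightarrow> nat \<Rightarrow> nat \<Rightarrow> nat \<Rightarrow> nat" where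
  "sconst m i j h = (if max i j \<le> h \<and> h \<le> i + j
      then (h choose i) * (h choose j) * ((m + i + j) choose (i + j - h)) else 0)"

definition smult_alg :: "nat \<Rightarrow> nat \<Rightarrow> (nat \<Rightarrow> 'a::comm_ring_1) \<Rightarrow> (nat \<Rightarrow> 'a) \<Rightarrow> (nat \<Rightarrow> 'a)" where
  "smult_alg m n x y = (\<lambda>h. if h \<le> n then
      (\<Sum>i\<le>n. \<Sum>j\<le>n. x i * y j * of_nat (sconst m i j h)) else 0)"

definition sbasis :: "nat \<Rightarrow> nat \<Rightarrow> (nat \<Rightarrow> 'a::comm_ring_1)" where
  "sbasis n a = (\<lambda>h. if h = a \<and> a \<le> n then 1 else 0)"

definition sone :: "nat \<Rightarrow> (nat \<Rightarrow> 'a::comm_ring_1)" where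
  "sone n = sbasis n 0"

definition digit3 :: "nat \<Rightarrow> nat \<Rightarrow> nat" where
  "digit3 x u = (x div 3 ^ u) mod 3"

definition efactor :: "nat \<Rightarrow> nat \<Rightarrow> nat \<Rightarrow> nat \<Rightarrow> (nat \<Rightarrow> 'a::comm_ring_1)" where
  "efactor n m g u =
    (let gu = digit3 g u; su = digit3 (m + 2 * g) u;
         b1 = sbasis n (3 ^ u); b2 = sbasis n (2 * 3 ^ u); one = sone n in
     if gu = 0 \<and> su = 0 then (\<lambda>h. one h + b1 h - b2 h)
     else if gu = 1 \<and> su = 2 then (\<lambda>h. b2 h - b1 h)
     else if gu = 0 \<and> su = 1 then (\<lambda>h. one h - b2 h)
     else if gu = 2 \<and> su = 2 then b2
     else if gu = 0 \<and> su = 2 then (\<lambda>h. one h - b1 h + b2 h)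
     else if gu = 1 \<and> su = 1 then (\<lambda>h. b1 h - b2 h)
     else one)"

definition e_le :: "nat \<Rightarrow> nat \<Rightarrow> nat \<Rightarrow> nat \<Rightarrow> (nat \<Rightarrow> 'a::comm_ring_1)" where
  "e_le n m g t = foldr (\<lambda>u acc. smult_alg m n (efactor n m g u) acc) [0..<Suc t] (sone n)"

end

theory Submission
  imports Defs
begin


lemma of_nat_mod3:
  assumes "CHAR('a::comm_ring_1) = 3"
  shows "(of_nat k :: 'a) = of_nat (k mod 3)"
proof -
  have 3: "(3 :: 'a) = 0" using assms by (metis of_nat_CHAR of_nat_numeral)
  have "(of_nat k :: 'a) = of_nat (k mod 3 + 3 * (k div 3))" by (simp only: mod_mult_div_eq)
  also have "\<dots> = of_nat (k mod 3) + 3 * of_nat (k div 3)" by (simp only: of_nat_add of_nat_mult of_nat_numeral)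
  finally show ?thesis using 3 by simp
qed

lemma three_eq0:
  assumes "CHAR('a::comm_ring_1) = 3"
  shows "(3::'a) = 0"
  using assms by (metis of_nat_CHAR of_nat_numeral)

lemma choose_plus3:
  "(x + 3) choose (k + 3) = (x choose (k+3)) + 3*(x choose (k+2)) + 3*(x choose (k+1)) + (x choose k)"
proof -
  have "(x + 3) choose (k + 3) = Suc (Suc (Suc x)) choose Suc (Suc (Suc k))" by (simp add: numeral_eq_Suc)
  also have "\<dots> = (x choose (k+3)) + 3*(x choose (k+2)) + 3*(x choose (k+1)) + (x choose k)"
    by (simp add: numeral_eq_Suc)
  finally show ?thesis .
qed

lemma choose_plus3_mod:
  assumes "CHAR('a::comm_ring_1) = 3"
  shows "(of_nat ((x + 3) choose k) :: 'a) = of_nat (x choose k) + (if 3 \<le> k then of_nat (x choose (k - 3)) else 0)"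
proof (cases "3 \<le> k")
  case True
  then obtain k' where k: "k = k' + 3" by (metis add.commute le_iff_add)
  have 3: "(3::'a) = 0" using three_eq0[OF assms] .
  show ?thesis using True unfolding k choose_plus3 by (simp add: 3 add_ac)
next
  case False
  hence "k = 0 \<or> k = 1 \<or> k = 2" by auto
  moreover have "(3::'a) = 0" using three_eq0[OF assms] .
  ultimately show ?thesis using False
    by (auto simp: numeral_eq_Suc algebra_simps)
qed

lemma lucas3:
  assumes ch: "CHAR('a::comm_ring_1) = 3" and a: "a < 3" and b: "b < 3"
  shows "(of_nat ((3*A + a) choose (3*B + b)) :: 'a) = of_nat (a choose b) * of_nat (A choose B)"
  using a b
proof (induction A arbitrary: B)
  case 0
  show ?case
  proof (cases B)
    case 0 thus ?thesis by simp
  next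
    case (Suc B')
    hence "a < 3*B + b" using 0 by simp
    thus ?thesis using Suc by (simp add: binomial_eq_0)
  qed
next
  case (Suc A)
  have e: "3 * Suc A + a = (3*A + a) + 3" by simp
  show ?case
  proof (cases B)
    case 0
    have "\<not> 3 \<le> 3*B + b" using 0 Suc by simp
    then show ?thesis unfolding e using choose_plus3_mod[OF ch, of "3*A+a" "3*B+b"] Suc.IH[OF Suc.prems, of B] 0
      by simp
  next
    case (Suc B')
    have k: "3*B + b - 3 = 3*B' + b" using Suc by simp
    have "(of_nat ((3 * Suc A + a) choose (3 * B + b)) :: 'a) =
        of_nat ((3*A+a) choose (3*B+b)) + of_nat ((3*A+a) choose (3*B'+b))"
      unfolding e using choose_plus3_mod[OF ch, of "3*A+a" "3*B+b"] k Suc by simp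
    also have "\<dots> = of_nat (a choose b) * (of_nat (A choose B) + of_nat (A choose B'))"
      using Suc.IH[OF Suc.prems, of B] Suc.IH[OF Suc.prems, of B'] by (simp add: algebra_simps)
    also have "of_nat (A choose B) + of_nat (A choose B') = (of_nat (Suc A choose B) :: 'a)"
      using Suc by simp
    finally show ?thesis .
  qed
qed

lemma lucas3b:
  assumes ch: "CHAR('a::comm_ring_1) = 3" and a: "a < 3" and b: "b < 3"
  shows "(of_nat ((a + 3*A) choose (b + 3*B)) :: 'a) = of_nat (a choose b) * of_nat (A choose B)"
  using lucas3[OF ch a b, of A B] by (simp add: add.commute)

lemma lucas3':
  assumes ch: "CHAR('a::comm_ring_1) = 3"
  shows "(of_nat (x choose y) :: 'a) = of_nat ((x mod 3) choose (y mod 3)) * of_nat ((x div 3) choose (y div 3))"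
proof -
  have "x = 3*(x div 3) + x mod 3" "y = 3*(y div 3) + y mod 3" by simp_all
  hence "(of_nat (x choose y) :: 'a) = of_nat ((3*(x div 3) + x mod 3) choose (3*(y div 3) + y mod 3))" by simp
  also have "\<dots> = of_nat ((x mod 3) choose (y mod 3)) * of_nat ((x div 3) choose (y div 3))"
    by (rule lucas3[OF ch]) simp_all
  finally show ?thesis .
qed


lemma sconst_alt:
  "sconst m i j H = (if H \<le> i + j then (H choose i) * (H choose j) * ((m + i + j) choose (i + j - H)) else 0)"
  unfolding sconst_def by (auto simp: binomial_eq_0)

definition alphaN :: "nat \<Rightarrow> nat \<Rightarrow> nat \<Rightarrow> nat \<Rightarrow> nat" where
  "alphaN m0 i0 j0 H0 = (if H0 \<le> i0 + j0 then (H0 choose i0) * (H0 choose j0) * (((m0 + i0 + j0) mod 3) choose (i0 + j0 - H0)) else 0)"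

definition betaN :: "nat \<Rightarrow> nat \<Rightarrow> nat \<Rightarrow> nat \<Rightarrow> nat" where
  "betaN m0 i0 j0 H0 = (if H0 \<le> i0 + j0 then 0 else (H0 choose i0) * (H0 choose j0) * (((m0 + i0 + j0) mod 3) choose (i0 + j0 + 3 - H0)))"

definition carryN :: "nat \<Rightarrow> nat \<Rightarrow> nat \<Rightarrow> nat" where
  "carryN m0 i0 j0 = (m0 + i0 + j0) div 3"

lemma DEC:
  fixes m i j H :: nat
  assumes ch: "CHAR('a::comm_ring_1) = 3"
  defines "M \<equiv> m div 3 + carryN (m mod 3) (i mod 3) (j mod 3)"
  shows "(of_nat (sconst m i j H) :: 'a) =
     of_nat (alphaN (m mod 3) (i mod 3) (j mod 3) (H mod 3)) * of_nat (sconst M (i div 3) (j div 3) (H div 3))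
   + of_nat (betaN (m mod 3) (i mod 3) (j mod 3) (H mod 3)) *
       (of_nat (sconst (Suc M) (i div 3) (j div 3) (H div 3)) - of_nat (sconst M (i div 3) (j div 3) (H div 3)))"
proof -
  define i0 where "i0 = i mod 3"
  define j0 where "j0 = j mod 3"
  define H0 where "H0 = H mod 3"
  define m0 where "m0 = m mod 3"
  define i' where "i' = i div 3"
  define j' where "j' = j div 3"
  define H' where "H' = H div 3"
  define s where "s = (m0 + i0 + j0) mod 3"
  have ei: "i = i0 + 3*i'" and ej: "j = j0 + 3*j'" and eH: "H = H0 + 3*H'"
    unfolding i0_def i'_def j0_def j'_def H0_def H'_def by simp_all
  have lt: "i0 < 3" "j0 < 3" "H0 < 3" "m0 < 3" "s < 3"
    unfolding i0_def j0_def H0_def m0_def s_def by simp_all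
  have eM: "M = m div 3 + (m0 + i0 + j0) div 3"
    unfolding M_def carryN_def m0_def i0_def j0_def by simp
  have emij: "m + i + j = s + 3 * (M + i' + j')"
    unfolding eM s_def using ei ej m0_def by simp
  have LHi: "(of_nat (H choose i) :: 'a) = of_nat (H0 choose i0) * of_nat (H' choose i')"
    unfolding eH ei by (rule lucas3b[OF ch]) (use lt in auto)
  have LHj: "(of_nat (H choose j) :: 'a) = of_nat (H0 choose j0) * of_nat (H' choose j')"
    unfolding eH ej by (rule lucas3b[OF ch]) (use lt in auto)
  let ?A = "alphaN m0 i0 j0 H0" and ?B = "betaN m0 i0 j0 H0"
  let ?S = "\<lambda>M. (of_nat (sconst M i' j' H') :: 'a)"
  have goal: "(of_nat (sconst m i j H) :: 'a) = of_nat ?A * ?S M + of_nat ?B * (?S (Suc M) - ?S M)"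
  proof (cases "H0 < i0 \<or> H0 < j0")
    case True
    hence z: "(H0 choose i0) * (H0 choose j0) = 0" by (auto simp: binomial_eq_0)
    hence "?A = 0" "?B = 0" unfolding alphaN_def betaN_def by auto
    moreover have "(of_nat (sconst m i j H) :: 'a) = 0"
    proof -
      have "(of_nat (sconst m i j H) :: 'a) = (if H \<le> i + j then of_nat (H choose i) * of_nat (H choose j) * of_nat ((m + i + j) choose (i + j - H)) else 0)"
        by (simp add: sconst_alt)
      also have "\<dots> = 0" using True by (auto simp: LHi LHj binomial_eq_0)
      finally show ?thesis .
    qed
    ultimately show ?thesis by simp
  next
    case False
    hence ge: "i0 \<le> H0" "j0 \<le> H0" by auto
    show ?thesis
    proof (cases "H0 \<le> i0 + j0")
      case True
      hence B0: "?B = 0" unfolding betaN_def by simp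
      have A: "?A = (H0 choose i0) * (H0 choose j0) * (s choose (i0 + j0 - H0))"
        unfolding alphaN_def s_def using True by simp
      show ?thesis
      proof (cases "H' \<le> i' + j'")
        case True2: True
        have le: "H \<le> i + j" using True True2 ei ej eH by simp
        have ed: "i + j - H = (i0 + j0 - H0) + 3 * (i' + j' - H')" using True True2 ei ej eH by simp
        have "(of_nat ((m + i + j) choose (i + j - H)) :: 'a) = of_nat (s choose (i0 + j0 - H0)) * of_nat ((M + i' + j') choose (i' + j' - H'))"
          unfolding emij ed by (rule lucas3b[OF ch]) (use lt ge in auto)
        moreover have "(of_nat (sconst m i j H) :: 'a) = of_nat (H choose i) * of_nat (H choose j) * of_nat ((m + i + j) choose (i + j - H))"
          using le by (simp add: sconst_alt)
        moreover have "?S M = of_nat (H' choose i') * of_nat (H' choose j') * of_nat ((M + i' + j') choose (i' + j' - H'))"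
          using True2 by (simp add: sconst_alt)
        ultimately show ?thesis by (simp add: B0 A LHi LHj algebra_simps)
      next
        case False2: False
        have "\<not> H \<le> i + j" using True False2 ei ej eH ge lt by linarith
        hence "sconst m i j H = 0" by (simp add: sconst_alt)
        moreover have "sconst M i' j' H' = 0" using False2 by (simp add: sconst_alt)
        ultimately show ?thesis by (simp add: B0)
      qed
    next
      case False
      hence A0: "?A = 0" unfolding alphaN_def by simp
      have B: "?B = (H0 choose i0) * (H0 choose j0) * (s choose (i0 + j0 + 3 - H0))"
        unfolding betaN_def s_def using False by simp
      show ?thesis
      proof (cases "H' < i' + j'")
        case True2: True
        have le: "H \<le> i + j" using False True2 ei ej eH lt by simp
        have ed: "i + j - H = (i0 + j0 + 3 - H0) + 3 * (i' + j' - H' - 1)" using False True2 ei ej eH lt by simp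
        have "(of_nat ((m + i + j) choose (i + j - H)) :: 'a) = of_nat (s choose (i0 + j0 + 3 - H0)) * of_nat ((M + i' + j') choose (i' + j' - H' - 1))"
          unfolding emij ed by (rule lucas3b[OF ch]) (use lt ge False in auto)
        moreover have "(of_nat (sconst m i j H) :: 'a) = of_nat (H choose i) * of_nat (H choose j) * of_nat ((m + i + j) choose (i + j - H))"
          using le by (simp add: sconst_alt)
        moreover have pas: "(Suc M + i' + j') choose (i' + j' - H') = ((M + i' + j') choose (i' + j' - H')) + ((M + i' + j') choose (i' + j' - H' - 1))"
        proof -
          obtain d where d: "i' + j' - H' = Suc d" using True2 by (metis Suc_diff_Suc)
          show ?thesis unfolding d by simp
        qed
        moreover have "?S (Suc M) - ?S M = of_nat (H' choose i') * of_nat (H' choose j') * of_nat ((M + i' + j') choose (i' + j' - H' - 1))"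
          using True2 pas by (simp add: sconst_alt algebra_simps)
        ultimately show ?thesis by (simp add: A0 B LHi LHj algebra_simps)
      next
        case False2: False
        have "\<not> H \<le> i + j" using False False2 ei ej eH ge by simp
        hence "sconst m i j H = 0" by (simp add: sconst_alt)
        moreover have "?S (Suc M) = ?S M"
          using False2 by (cases "H' = i' + j'") (auto simp: sconst_alt)
        ultimately show ?thesis by (simp add: A0)
      qed
    qed
  qed
  thus ?thesis unfolding i0_def j0_def H0_def m0_def i'_def j'_def H'_def .
qed


definition tri :: "nat \<Rightarrow> nat \<Rightarrow> nat \<Rightarrow> nat \<Rightarrow> nat" where
  "tri x0 x1 x2 a = (if a = 0 then x0 else if a = 1 then x1 else x2)"

definition phiN :: "nat \<Rightarrow> nat \<Rightarrow> nat \<Rightarrow> nat" where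
  "phiN g0 s0 a = (if g0 = 0 \<and> s0 = 0 then tri 1 1 2 a
     else if g0 = 1 \<and> s0 = 2 then tri 0 2 1 a
     else if g0 = 0 \<and> s0 = 1 then tri 1 0 2 a
     else if g0 = 2 \<and> s0 = 2 then tri 0 0 1 a
     else if g0 = 0 \<and> s0 = 2 then tri 1 2 1 a
     else if g0 = 1 \<and> s0 = 1 then tri 0 1 2 a
     else tri 1 0 0 a)"

definition KN :: "nat \<Rightarrow> nat \<Rightarrow> nat \<Rightarrow> nat \<Rightarrow> nat" where
  "KN g0 s0 H0 t = (let m0 = (s0 + 6 - 2*g0) mod 3 in
     \<Sum>i0<3. \<Sum>j0<3. phiN g0 s0 i0 * phiN g0 s0 j0 *
       (alphaN m0 i0 j0 H0 * (if carryN m0 i0 j0 = t then 1 else 0)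
        + betaN m0 i0 j0 H0 * ((if Suc (carryN m0 i0 j0) = t then 1 else 0) + 2 * (if carryN m0 i0 j0 = t then 1 else 0))))"

lemma table_all:
  "\<forall>g0\<in>{0,1,2}. \<forall>s0\<in>{0,1,2}. \<forall>H0\<in>{0,1,2}. \<forall>t\<in>{0,1,2,3}. g0 \<le> s0 \<longrightarrow>
     KN g0 s0 H0 t mod 3 = (if t = (if s0 < 2*g0 then 1 else 0) then phiN g0 s0 H0 else 0)"
  by code_simp


lemma two_eq_m1:
  assumes "CHAR('a::comm_ring_1) = 3"
  shows "(2::'a) = - 1"
proof -
  have "(3::'a) = 0" by (rule three_eq0[OF assms])
  hence "(2::'a) + 1 = 0" by simp
  thus ?thesis by (simp add: eq_neg_iff_add_eq_0)
qed

lemma sum4: "(\<Sum>t<4. (f::nat\<Rightarrow>'a) t) = f 0 + f 1 + f 2 + (f 3 :: 'a::comm_monoid_add)"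
  by (simp add: eval_nat_numeral lessThan_Suc add_ac)

lemma sum3: "(\<Sum>t<3. (f::nat\<Rightarrow>'a) t) = f 0 + f 1 + (f 2 :: 'a::comm_monoid_add)"
  by (simp add: eval_nat_numeral lessThan_Suc add_ac)

lemma coef4:
  assumes ch: "CHAR('a::comm_ring_1) = 3" and c: "c \<le> 2"
  shows "of_nat a * P (M0 + c) + of_nat b * (P (Suc (M0+c)) - P (M0+c)) =
    (\<Sum>t<4. (of_nat (a*(if c = t then 1 else 0) + b*((if Suc c = t then 1 else 0) + 2*(if c = t then 1 else 0))) :: 'a) * P (M0+t))"
proof -
  have 2: "(2::'a) = -1" by (rule two_eq_m1[OF ch])
  have "c = 0 \<or> c = 1 \<or> c = 2" using c by auto
  thus ?thesis
    by (elim disjE) (simp_all add: sum4 2 algebra_simps numeral_3_eq_3)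
qed


lemma carry_le: "m0 < 3 \<Longrightarrow> i0 < 3 \<Longrightarrow> j0 < 3 \<Longrightarrow> carryN m0 i0 j0 \<le> 2"
  unfolding carryN_def by simp

lemma regroup:
  assumes ch: "CHAR('a::comm_ring_1) = 3" and g: "g0 \<le> s0" "s0 < 3" and H: "H0 < 3"
  shows "(\<Sum>i0<3. \<Sum>j0<3. (of_nat (phiN g0 s0 i0) :: 'a) * of_nat (phiN g0 s0 j0) *
     (of_nat (alphaN ((s0 + 6 - 2*g0) mod 3) i0 j0 H0) * P (M0 + carryN ((s0 + 6 - 2*g0) mod 3) i0 j0)
      + of_nat (betaN ((s0 + 6 - 2*g0) mod 3) i0 j0 H0) * (P (Suc (M0 + carryN ((s0 + 6 - 2*g0) mod 3) i0 j0)) - P (M0 + carryN ((s0 + 6 - 2*g0) mod 3) i0 j0))))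
   = of_nat (phiN g0 s0 H0) * P (M0 + (if s0 < 2*g0 then 1 else 0))"
proof -
  define m0 where "m0 = (s0 + 6 - 2*g0) mod 3"
  let ?w = "\<lambda>i0 j0 t. phiN g0 s0 i0 * phiN g0 s0 j0 * (alphaN m0 i0 j0 H0 * (if carryN m0 i0 j0 = t then 1 else 0) + betaN m0 i0 j0 H0 * ((if Suc (carryN m0 i0 j0) = t then 1 else 0) + 2 * (if carryN m0 i0 j0 = t then 1 else 0)))"
  have step1: "\<And>i0 j0. i0 < 3 \<Longrightarrow> j0 < 3 \<Longrightarrow> (of_nat (phiN g0 s0 i0) :: 'a) * of_nat (phiN g0 s0 j0) *
     (of_nat (alphaN m0 i0 j0 H0) * P (M0 + carryN m0 i0 j0)
      + of_nat (betaN m0 i0 j0 H0) * (P (Suc (M0 + carryN m0 i0 j0)) - P (M0 + carryN m0 i0 j0)))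
     = (\<Sum>t<4. of_nat (?w i0 j0 t) * P (M0 + t))"
  proof -
    fix i0 j0 :: nat assume "i0 < 3" "j0 < 3"
    hence cl: "carryN m0 i0 j0 \<le> 2" using carry_le[of m0 i0 j0] unfolding m0_def by simp
    show "?thesis i0 j0"
      unfolding coef4[OF ch cl] by (simp add: sum_distrib_left mult.assoc)
  qed
  have "(\<Sum>i0<3. \<Sum>j0<3. (of_nat (phiN g0 s0 i0) :: 'a) * of_nat (phiN g0 s0 j0) *
     (of_nat (alphaN m0 i0 j0 H0) * P (M0 + carryN m0 i0 j0)
      + of_nat (betaN m0 i0 j0 H0) * (P (Suc (M0 + carryN m0 i0 j0)) - P (M0 + carryN m0 i0 j0))))
    = (\<Sum>i0<3. \<Sum>j0<3. \<Sum>t<4. of_nat (?w i0 j0 t) * P (M0 + t))"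
    by (intro sum.cong refl) (simp add: step1)
  also have "\<dots> = (\<Sum>t<4. \<Sum>i0<3. \<Sum>j0<3. of_nat (?w i0 j0 t) * P (M0 + t))"
    by (simp only: sum.swap[of _ "{..<3::nat}" "{..<4::nat}"])
  also have "\<dots> = (\<Sum>t<4. of_nat (KN g0 s0 H0 t) * P (M0 + t))"
    unfolding KN_def Let_def m0_def[symmetric]
    by (simp only: sum_distrib_right[symmetric] of_nat_sum[symmetric])
  also have "\<dots> = (\<Sum>t<4. of_nat (if t = (if s0 < 2*g0 then 1 else 0) then phiN g0 s0 H0 else 0) * P (M0 + t))"
  proof (intro sum.cong refl)
    fix t :: nat assume "t \<in> {..<4}"
    hence "t \<in> {0,1,2,3}" by auto
    moreover have "g0 \<in> {0,1,2}" "s0 \<in> {0,1,2}" "H0 \<in> {0,1,2}" using g H by auto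
    ultimately have "KN g0 s0 H0 t mod 3 = (if t = (if s0 < 2*g0 then 1 else 0) then phiN g0 s0 H0 else 0)"
      using table_all g by blast
    thus "(of_nat (KN g0 s0 H0 t) :: 'a) * P (M0 + t) = of_nat (if t = (if s0 < 2*g0 then 1 else 0) then phiN g0 s0 H0 else 0) * P (M0 + t)"
      using of_nat_mod3[OF ch, of "KN g0 s0 H0 t"] by simp
  qed
  also have "\<dots> = of_nat (phiN g0 s0 H0) * P (M0 + (if s0 < 2*g0 then 1 else 0))"
    by (simp add: sum4)
  finally show ?thesis unfolding m0_def .
qed



definition mp :: "nat \<Rightarrow> nat \<Rightarrow> nat" where
  "mp m g = (m + 2*g) div 3 - 2*(g div 3)"

fun PhiF :: "nat \<Rightarrow> nat \<Rightarrow> nat \<Rightarrow> nat \<Rightarrow> 'a::comm_ring_1" where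
  "PhiF 0 m g h = (if h = 0 then 1 else 0)"
| "PhiF (Suc k) m g h = of_nat (phiN (g mod 3) ((m + 2*g) mod 3) (h mod 3)) * PhiF k (mp m g) (g div 3) (h div 3)"

lemma divmod3: "(3*x + c) div 3 = x + (c::nat) div 3" "(3*(x::nat) + c) mod 3 = c mod 3"
  by simp_all


lemma ar_all: "g mod 3 \<le> (m + 2*g) mod 3 \<Longrightarrow> (m::nat) mod 3 = (((m + 2*g) mod 3) + 6 - 2*(g mod 3)) mod 3 \<and>
   m div 3 + (if (m + 2*g) mod 3 < 2*(g mod 3) then 1 else 0) = mp m g \<and>
   mp m g + 2*(g div 3) = (m + 2*g) div 3"
proof -
  define a r b q where "a = m div 3" "r = m mod 3" "b = g div 3" "q = g mod 3"
  have m: "m = 3*a + r" and g: "g = 3*b + q" unfolding a_r_b_q_def by simp_all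
  have r: "r < 3" and q: "q < 3" unfolding a_r_b_q_def by simp_all
  have e: "m + 2*g = 3*(a + 2*b) + (r + 2*q)" unfolding m g by simp
  assume le: "g mod 3 \<le> (m + 2*g) mod 3"
  have "r \<in> {0,1,2}" "q \<in> {0,1,2}" using r q by auto
  thus ?thesis using le unfolding mp_def e divmod3 unfolding m g divmod3
    by (auto simp: algebra_simps)
qed

lemma ar_a: "g mod 3 \<le> (m + 2*g) mod 3 \<Longrightarrow> (m::nat) mod 3 = (((m + 2*g) mod 3) + 6 - 2*(g mod 3)) mod 3"
  using ar_all by blast

lemma ar_b: "g mod 3 \<le> (m + 2*g) mod 3 \<Longrightarrow> (m::nat) div 3 + (if (m + 2*g) mod 3 < 2*(g mod 3) then 1 else 0) = mp m g"
  using ar_all by blast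

lemma ar_c: "mp m g + 2*(g div 3) = (m + 2*g) div 3"
proof -
  have "3*(g div 3) \<le> g" by simp
  hence "6*(g div 3) \<le> m + 2*g" by linarith
  hence "(3*(2*(g div 3))) div 3 \<le> (m + 2*g) div 3" by (intro div_le_mono) simp
  thus ?thesis unfolding mp_def by simp
qed

lemma binom_cond:
  assumes ch: "CHAR('a::comm_ring_1) = 3" and nd: "\<not> 3 dvd ((m + 2*g) choose g)"
  shows "g mod 3 \<le> (m + 2*g) mod 3" "\<not> 3 dvd ((mp m g + 2*(g div 3)) choose (g div 3))"
proof -
  have nz: "(of_nat ((m + 2*g) choose g) :: 'a) \<noteq> 0"
    using nd by (simp add: of_nat_eq_0_iff_char_dvd ch)
  have "(of_nat ((m + 2*g) choose g) :: 'a) = of_nat (((m+2*g) mod 3) choose (g mod 3)) * of_nat (((m+2*g) div 3) choose (g div 3))"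
    by (rule lucas3'[OF ch])
  with nz have a: "(of_nat (((m+2*g) mod 3) choose (g mod 3)) :: 'a) \<noteq> 0" and b: "(of_nat (((m+2*g) div 3) choose (g div 3)) :: 'a) \<noteq> 0"
    by auto
  from a have "((m+2*g) mod 3) choose (g mod 3) \<noteq> 0" by (metis of_nat_0)
  thus "g mod 3 \<le> (m + 2*g) mod 3" by (metis binomial_eq_0 not_le)
  from b show "\<not> 3 dvd ((mp m g + 2*(g div 3)) choose (g div 3))"
    unfolding ar_c by (simp add: of_nat_eq_0_iff_char_dvd ch)
qed

lemma sum_split3: "(\<Sum>i<3*(N::nat). f i) = (\<Sum>i0<3. \<Sum>i'<N. (f (i0 + 3*i') :: 'a::comm_monoid_add))"
proof (induction N)
  case 0 thus ?case by simp
next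
  case (Suc N)
  have e: "3 * Suc N = Suc (Suc (Suc (3*N)))" by simp
  show ?case unfolding e by (simp add: Suc sum3 sum.distrib add_ac)
qed


lemma IDEM:
  assumes ch: "CHAR('a::comm_ring_1) = 3"
  shows "\<not> 3 dvd ((m + 2*g) choose g) \<Longrightarrow> H < 3^k \<Longrightarrow>
    (\<Sum>i<3^k. \<Sum>j<3^k. PhiF k m g i * PhiF k m g j * of_nat (sconst m i j H)) = (PhiF k m g H :: 'a)"
proof (induction k arbitrary: m g H)
  case 0
  then show ?case by (simp add: sconst_def)
next
  case (Suc k)
  define N where "N = (3::nat)^k"
  define \<Psi> where "\<Psi> = (PhiF k (mp m g) (g div 3) :: nat \<Rightarrow> 'a)"
  define g0 where "g0 = g mod 3"
  define s0 where "s0 = (m+2*g) mod 3"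
  define m0 where "m0 = m mod 3"
  define H0 where "H0 = H mod 3"
  let ?ph = "\<lambda>a. (of_nat (phiN g0 s0 a) :: 'a)"
  define P where "P = (\<lambda>M. \<Sum>i'<N. \<Sum>j'<N. \<Psi> i' * \<Psi> j' * (of_nat (sconst M i' j' (H div 3)) :: 'a))"
  have bc: "g0 \<le> s0" "\<not> 3 dvd ((mp m g + 2*(g div 3)) choose (g div 3))"
    using binom_cond[OF ch Suc.prems(1)] g0_def s0_def by auto
  have Hd: "H div 3 < N" using Suc.prems(2) unfolding N_def by simp
  have IH: "P (mp m g) = \<Psi> (H div 3)" unfolding P_def \<Psi>_def N_def
    using Suc.IH[OF bc(2) Hd[unfolded N_def]] .
  have Phi_dec: "\<And>i0 i'. i0 < 3 \<Longrightarrow> PhiF (Suc k) m g (i0 + 3*i') = ?ph i0 * \<Psi> i'"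
    by (simp add: \<Psi>_def g0_def s0_def)
  have e3: "(3::nat)^Suc k = 3*N" unfolding N_def by simp
  have "(\<Sum>i<3^Suc k. \<Sum>j<3^Suc k. PhiF (Suc k) m g i * PhiF (Suc k) m g j * of_nat (sconst m i j H))
     = (\<Sum>i0<3. \<Sum>i'<N. \<Sum>j0<3. \<Sum>j'<N. PhiF (Suc k) m g (i0+3*i') * PhiF (Suc k) m g (j0+3*j') * (of_nat (sconst m (i0+3*i') (j0+3*j') H) :: 'a))"
    unfolding e3 by (simp only: sum_split3)
  also have "\<dots> = (\<Sum>i0<3. \<Sum>j0<3. \<Sum>i'<N. \<Sum>j'<N. PhiF (Suc k) m g (i0+3*i') * PhiF (Suc k) m g (j0+3*j') * (of_nat (sconst m (i0+3*i') (j0+3*j') H) :: 'a))"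
    by (simp only: sum.swap[of _ "{..<N}" "{..<3::nat}"])
  also have "\<dots> = (\<Sum>i0<3. \<Sum>j0<3. ?ph i0 * ?ph j0 *
       (of_nat (alphaN m0 i0 j0 H0) * P (m div 3 + carryN m0 i0 j0)
        + of_nat (betaN m0 i0 j0 H0) * (P (Suc (m div 3 + carryN m0 i0 j0)) - P (m div 3 + carryN m0 i0 j0))))"
  proof (intro sum.cong refl)
    fix i0 j0 assume "i0 \<in> {..<3::nat}" "j0 \<in> {..<3::nat}"
    hence i0: "i0 < 3" and j0: "j0 < 3" by auto
    define M where "M = m div 3 + carryN m0 i0 j0"
    define A where "A = (of_nat (alphaN m0 i0 j0 H0) :: 'a)"
    define B where "B = (of_nat (betaN m0 i0 j0 H0) :: 'a)"
    let ?S = "\<lambda>M i' j'. (of_nat (sconst M i' j' (H div 3)) :: 'a)"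
    have D: "\<And>i' j'. (of_nat (sconst m (i0+3*i') (j0+3*j') H) :: 'a) = A * ?S M i' j' + B * (?S (Suc M) i' j' - ?S M i' j')"
    proof -
      fix i' j' :: nat
      have "(i0+3*i') mod 3 = i0" "(i0+3*i') div 3 = i'" "(j0+3*j') mod 3 = j0" "(j0+3*j') div 3 = j'"
        using i0 j0 by simp_all
      thus "?thesis i' j'" using DEC[OF ch, of m "i0+3*i'" "j0+3*j'" H]
        unfolding A_def B_def M_def m0_def H0_def by simp
    qed
    have "(\<Sum>i'<N. \<Sum>j'<N. PhiF (Suc k) m g (i0+3*i') * PhiF (Suc k) m g (j0+3*j') * (of_nat (sconst m (i0+3*i') (j0+3*j') H) :: 'a))
      = (\<Sum>i'<N. \<Sum>j'<N. ?ph i0 * ?ph j0 * (A * (\<Psi> i' * \<Psi> j' * ?S M i' j') + B * (\<Psi> i' * \<Psi> j' * ?S (Suc M) i' j' - \<Psi> i' * \<Psi> j' * ?S M i' j')))"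
      by (intro sum.cong refl) (simp only: Phi_dec[OF i0] Phi_dec[OF j0] D, simp add: algebra_simps)
    also have "\<dots> = ?ph i0 * ?ph j0 * (A * P M + B * (P (Suc M) - P M))"
      unfolding P_def by (simp only: sum_subtractf[symmetric] sum_distrib_left sum.distrib[symmetric])
    finally show "(\<Sum>i'<N. \<Sum>j'<N. PhiF (Suc k) m g (i0+3*i') * PhiF (Suc k) m g (j0+3*j') * (of_nat (sconst m (i0+3*i') (j0+3*j') H) :: 'a))
      = ?ph i0 * ?ph j0 * (of_nat (alphaN m0 i0 j0 H0) * P (m div 3 + carryN m0 i0 j0)
        + of_nat (betaN m0 i0 j0 H0) * (P (Suc (m div 3 + carryN m0 i0 j0)) - P (m div 3 + carryN m0 i0 j0)))"
      unfolding A_def B_def M_def .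
  qed
  also have "\<dots> = ?ph H0 * P (m div 3 + (if s0 < 2*g0 then 1 else 0))"
  proof -
    have "m0 = (s0 + 6 - 2*g0) mod 3" unfolding m0_def s0_def g0_def
      by (rule ar_a) (use bc(1) in \<open>simp add: g0_def s0_def\<close>)
    moreover have "s0 < 3" "H0 < 3" unfolding s0_def H0_def by simp_all
    ultimately show ?thesis using regroup[OF ch bc(1), of H0 P "m div 3"] by simp
  qed
  also have "\<dots> = ?ph H0 * \<Psi> (H div 3)"
    using ar_b[of g m] bc(1) IH unfolding g0_def s0_def by simp
  also have "\<dots> = PhiF (Suc k) m g H"
    by (simp add: \<Psi>_def g0_def s0_def H0_def)
  finally show ?case .
qed



lemma PhiF_zero: "3^k \<le> h \<Longrightarrow> PhiF k m g h = 0"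
proof (induction k arbitrary: m g h)
  case 0 thus ?case by simp
next
  case (Suc k)
  have "3^k \<le> h div 3" using Suc.prems by (simp add: less_eq_div_iff_mult_less_eq mult.commute)
  thus ?case using Suc.IH by simp
qed

lemma digit3_div: "digit3 (x div 3) v = digit3 x (Suc v)"
  unfolding digit3_def by (simp add: div_mult2_eq)

lemma digit3_0: "digit3 x 0 = x mod 3"
  unfolding digit3_def by simp

lemma PhiF_prod:
  "PhiF k m g h = (if h < 3^k then (\<Prod>v<k. of_nat (phiN (digit3 g v) (digit3 (m + 2*g) v) (digit3 h v))) else 0)"
proof (induction k arbitrary: m g h)
  case 0 thus ?case by simp
next
  case (Suc k)
  have lt: "(h div 3 < 3^k) = (h < 3^Suc k)" by auto
  show ?case
    using Suc.IH[of "mp m g" "g div 3" "h div 3"]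
    by (simp add: lt ar_c digit3_div digit3_0 prod.lessThan_Suc_shift del: prod.lessThan_Suc)
qed

lemma sconst_0: "sconst M 0 J H = (if H = J then 1 else 0)"
proof (cases "H = J")
  case True
  have "sconst M 0 J J = (J choose 0) * (J choose J) * ((M + 0 + J) choose (0 + J - J))"
    unfolding sconst_def by (simp only: max_0L order_refl add_0 conj_absorb if_True)
  also have "\<dots> = 1" by (simp only: add_0 add_0_right binomial_n_0 binomial_n_n diff_self_eq_0 mult_1)
  finally show ?thesis using True by simp
next
  case False thus ?thesis unfolding sconst_def by simp
qed

lemma alpha_diag: "alphaN m0 a 0 a = 1"
  unfolding alphaN_def by simp

lemma shift:
  assumes ch: "CHAR('a::comm_ring_1) = 3"
  shows "a < 3 \<Longrightarrow> 3^(Suc v) dvd j \<Longrightarrow> (of_nat (sconst m (a*3^v) j h) :: 'a) = (if h = j + a*3^v then 1 else 0)"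
proof (induction v arbitrary: m j h)
  case 0
  have jm: "j mod 3 = 0" using 0 by simp
  have al: "alphaN (m mod 3) a 0 (h mod 3) = (if h mod 3 = a then 1 else 0)"
  proof (cases "h mod 3 = a")
    case True thus ?thesis unfolding True using alpha_diag[of "m mod 3" a] by simp
  next
    case False
    show ?thesis
    proof (cases "h mod 3 < a")
      case True
      have z: "(h mod 3) choose a = 0" using True by (rule binomial_eq_0)
      have "alphaN (m mod 3) a 0 (h mod 3) = 0" unfolding alphaN_def z by simp
      thus ?thesis using True by simp
    next
      case F2: False
      have nle: "\<not> (h mod 3 \<le> a + 0)" using F2 False by linarith
      show ?thesis unfolding alphaN_def by (simp only: nle False if_False)
    qed
  qed
  have "(of_nat (sconst m a j h) :: 'a) = (if h mod 3 = a then 1 else 0) * (if h div 3 = j div 3 then 1 else 0)"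
    using DEC[OF ch, of m a j h] 0 jm by (simp add: sconst_0 al)
  also have "\<dots> = (if h = j + a then 1 else 0)"
  proof -
    have jj: "j = 3 * (j div 3)" using mult_div_mod_eq[of 3 j] jm by simp
    have hh: "h = 3 * (h div 3) + h mod 3" using mult_div_mod_eq[of 3 h] by simp
    have "(h mod 3 = a \<and> h div 3 = j div 3) = (h = j + a)"
    proof
      assume "h mod 3 = a \<and> h div 3 = j div 3"
      thus "h = j + a" using jj hh by linarith
    next
      assume h: "h = j + a"
      hence "h = a + 3 * (j div 3)" using jj by linarith
      thus "h mod 3 = a \<and> h div 3 = j div 3" using 0(1) by simp
    qed
    thus ?thesis by auto
  qed
  finally show ?case by simp
next
  case (Suc v)
  obtain c where jc: "j = 3^(Suc (Suc v)) * c" using Suc.prems by blast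
  have jc': "j = 3 * (3^(Suc v) * c)" using jc by simp
  have jm: "j mod 3 = 0" using jc' by simp
  have jd: "3^(Suc v) dvd j div 3" using jc' by simp
  have am: "(a * 3^Suc v) mod 3 = 0" "(a * 3^Suc v) div 3 = a * 3^v" by simp_all
  have al: "alphaN (m mod 3) 0 0 (h mod 3) = (if h mod 3 = 0 then 1 else 0)"
    unfolding alphaN_def by simp
  have ca: "carryN (m mod 3) 0 0 = 0" unfolding carryN_def by simp
  have "(of_nat (sconst m (a*3^Suc v) j h) :: 'a) = (if h mod 3 = 0 then 1 else 0) * (if h div 3 = j div 3 + a*3^v then 1 else 0)"
    using DEC[OF ch, of m "a*3^Suc v" j h] Suc.IH[OF Suc.prems(1) jd] jm am al ca by simp
  also have "\<dots> = (if h = j + a*3^Suc v then 1 else 0)"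
  proof -
    have "(h mod 3 = 0 \<and> h div 3 = j div 3 + a*3^v) = (h = j + a*3^Suc v)"
    proof
      assume h: "h mod 3 = 0 \<and> h div 3 = j div 3 + a*3^v"
      have "h = 3 * (h div 3)" using h mult_div_mod_eq[of 3 h] by simp
      also have "\<dots> = 3 * (j div 3) + a*3^Suc v" using h by simp
      also have "3 * (j div 3) = j" using jm mult_div_mod_eq[of 3 j] by simp
      finally show "h = j + a*3^Suc v" .
    next
      assume h: "h = j + a*3^Suc v"
      have "j = 3 * (j div 3)" using jm mult_div_mod_eq[of 3 j] by simp
      hence "h = 3 * (j div 3 + a*3^v)" using h by simp
      thus "h mod 3 = 0 \<and> h div 3 = j div 3 + a*3^v" by simp
    qed
    thus ?thesis by auto
  qed
  finally show ?case .
qed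



lemma ef_form:
  assumes ch: "CHAR('a::comm_ring_1) = 3" and n: "2*3^w \<le> n"
  shows "efactor n m g w = (\<lambda>i. \<Sum>a<3. if i = a*3^w then (of_nat (phiN (digit3 g w) (digit3 (m+2*g) w) a) :: 'a) else 0)"
proof
  fix i :: nat
  have p: "0 < (3::nat)^w" by simp
  have d: "(3::nat)^w \<noteq> 2*3^w" "(0::nat) \<noteq> 3^w" "(0::nat) \<noteq> 2*3^w" "3^w \<noteq> (0::nat)" "2*3^w \<noteq> (0::nat)" "2*3^w \<noteq> (3::nat)^w"
    using p by simp_all
  have n1: "3^w \<le> n" "0 \<le> n" using n by simp_all
  have 2: "(2::'a) = -1" by (rule two_eq_m1[OF ch])
  consider "i = 0" | "i = 3^w" | "i = 2*3^w" | "i \<noteq> 0 \<and> i \<noteq> 3^w \<and> i \<noteq> 2*3^w" by blast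
  then show "(efactor n m g w i :: 'a) = (\<Sum>a<3. if i = a*3^w then (of_nat (phiN (digit3 g w) (digit3 (m+2*g) w) a) :: 'a) else 0)"
    by cases (simp_all add: efactor_def Let_def sbasis_def sone_def sum3 phiN_def tri_def 2 d n n1)
qed


lemma dvd_decomp:
  assumes "(3::nat)^w dvd h"
  shows "h = 3^w * (h div 3^w)" "digit3 h w = (h div 3^w) mod 3"
  using assms unfolding digit3_def by simp_all

lemma D1:
  assumes a: "a < 3" and le: "a*3^w \<le> h"
  shows "(3::nat)^(Suc w) dvd (h - a*3^w) \<longleftrightarrow> 3^w dvd h \<and> digit3 h w = a"
proof
  assume dv: "3^(Suc w) dvd (h - a*3^w)"
  have "(3::nat)^w dvd 3^(Suc w)" by (rule le_imp_power_dvd) simp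
  hence "3^w dvd (h - a*3^w)" using dv by (rule dvd_trans)
  hence "3^w dvd (h - a*3^w) + a*3^w" by simp
  hence hw: "3^w dvd h" using le by simp
  define q where "q = h div 3^w"
  have hq: "h = 3^w * q" unfolding q_def using hw by simp
  have aq: "a \<le> q" using le unfolding hq by (simp add: mult.commute)
  have "h - a*3^w = (q - a) * 3^w" using hq by (simp add: diff_mult_distrib mult.commute)
  hence "3^w * 3 dvd 3^w * (q - a)" using dv by (simp add: mult.commute)
  hence "3 dvd (q - a)" by (simp add: nat_mult_dvd_cancel_disj)
  then obtain k where k: "q - a = 3 * k" by blast
  have "q = a + 3 * k" using k aq by linarith
  hence "q mod 3 = a" using a by simp
  thus "3^w dvd h \<and> digit3 h w = a" using hw unfolding digit3_def q_def by simp
next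
  assume h: "3^w dvd h \<and> digit3 h w = a"
  define q where "q = h div 3^w"
  have hq: "h = 3^w * q" unfolding q_def using h by simp
  have qa: "q mod 3 = a" using h unfolding digit3_def q_def by simp
  have "q - a = 3 * (q div 3)" using qa minus_mod_eq_mult_div[of q 3] by simp
  have "h - a*3^w = (q - a) * 3^w" using hq by (simp add: diff_mult_distrib mult.commute)
  also have "\<dots> = 3^Suc w * (q div 3)" unfolding \<open>q - a = 3 * (q div 3)\<close> by (simp add: mult.commute)
  finally have "h - a*3^w = 3^Suc w * (q div 3)" .
  thus "3^(Suc w) dvd (h - a*3^w)" by simp
qed

lemma D3:
  assumes "(3::nat)^w dvd h"
  shows "digit3 h w * 3^w \<le> h"
proof -
  define q where "q = h div 3^w"
  have hq: "h = 3^w * q" unfolding q_def using assms by simp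
  have "q mod 3 \<le> q" by simp
  hence "q mod 3 * 3^w \<le> q * 3^w" by (rule mult_le_mono1)
  thus ?thesis unfolding digit3_def q_def[symmetric] using hq by (simp add: mult.commute)
qed

lemma D2:
  assumes "(3::nat)^w dvd h" and v: "w < v"
  shows "digit3 (h - digit3 h w * 3^w) v = digit3 h v"
proof -
  define q where "q = h div 3^w"
  have hq: "h = 3^w * q" unfolding q_def using assms by simp
  have dg: "digit3 h w = q mod 3" unfolding digit3_def q_def by simp
  from less_imp_Suc_add[OF v] obtain e where e: "v = Suc (w + e)" by blast
  have p: "(3::nat)^v = 3^w * (3 * 3^e)" unfolding e by (simp add: power_add)
  have "h - q mod 3 * 3^w = 3^w * (3 * (q div 3))"
  proof -
    have "q - q mod 3 = 3 * (q div 3)" by (simp add: minus_mod_eq_mult_div)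
    have f: "(q - q mod 3) * 3^w = q * 3^w - q mod 3 * 3^w" by (rule diff_mult_distrib)
    have hq': "h = q*3^w" using hq by (simp add: mult.commute)
    have "h - q mod 3 * 3^w = (q - q mod 3) * 3^w" unfolding f hq' by (rule refl)
    thus ?thesis using \<open>q - q mod 3 = 3 * (q div 3)\<close> by (simp add: mult.commute)
  qed
  hence "(h - q mod 3 * 3^w) div 3^v = (3^w * (3 * (q div 3))) div (3^w*(3*3^e))" using p by simp
  also have "\<dots> = (3 * (q div 3)) div (3*3^e)" by (rule div_mult_mult1) simp
  also have "\<dots> = q div 3 div 3^e" by (rule div_mult_mult1) simp
  finally have "(h - q mod 3 * 3^w) div 3^v = q div 3 div 3^e" .
  moreover have "h div 3^v = q div 3 div 3^e"
  proof -
    have "h div 3^v = (3^w*q) div (3^w*(3*3^e))" using hq p by simp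
    also have "\<dots> = q div (3*3^e)" by (rule div_mult_mult1) simp
    also have "\<dots> = q div 3 div 3^e" by (rule div_mult2_eq)
    finally show ?thesis .
  qed
  ultimately have "digit3 (h - q mod 3 * 3^w) v = digit3 h v" unfolding digit3_def by simp
  thus ?thesis by (simp only: dg)
qed


lemma STEP:
  fixes m g n u w :: nat
  assumes ch: "CHAR('a::comm_ring_1) = 3" and n: "n = 3^Suc u - 1" and w: "w \<le> u"
  defines "F \<equiv> \<lambda>v a. (of_nat (phiN (digit3 g v) (digit3 (m+2*g) v) a) :: 'a)"
  defines "R \<equiv> \<lambda>j. if j \<le> n \<and> 3^Suc w dvd j then (\<Prod>v\<in>{Suc w..u}. F v (digit3 j v)) else 0"
  shows "smult_alg m n (efactor n m g w) R = (\<lambda>h. if h \<le> n \<and> 3^w dvd h then (\<Prod>v\<in>{w..u}. F v (digit3 h v)) else 0)"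
proof
  fix h :: nat
  have pw: "3^w \<le> (3::nat)^u" using w by (simp add: power_increasing)
  have p1: "1 \<le> (3::nat)^w" by simp
  have pw3: "3*3^w \<le> 3*(3::nat)^u" using pw by simp
  have tw: "2*3^w \<le> n" unfolding n power_Suc using pw3 p1 by linarith
  have ef: "efactor n m g w = (\<lambda>i. \<Sum>a<3. if i = a*3^w then F w a else 0)"
    unfolding F_def by (rule ef_form[OF ch tw])
  show "smult_alg m n (efactor n m g w) R h = (if h \<le> n \<and> 3^w dvd h then (\<Prod>v\<in>{w..u}. F v (digit3 h v)) else 0)"
  proof (cases "h \<le> n")
    case False thus ?thesis by (simp add: smult_alg_def)
  next
    case True
    define S where "S = (\<lambda>i j. (of_nat (sconst m i j h) :: 'a))"
    define Q where "Q = (\<Prod>v\<in>{Suc w..u}. F v (digit3 h v))"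
    have pt: "\<And>a j. a < 3 \<Longrightarrow> R j * S (a*3^w) j = (if j = h - a*3^w then (if a*3^w \<le> h then R j else 0) else 0)"
    proof -
      fix a j :: nat assume a: "a<3"
      show "R j * S (a*3^w) j = (if j = h - a*3^w then (if a*3^w \<le> h then R j else 0) else 0)"
      proof (cases "R j = 0")
        case True thus ?thesis by (cases "j = h - a*3^w") auto
      next
        case False
        have "j \<le> n \<and> 3^Suc w dvd j"
        proof (rule ccontr)
          assume "\<not> (j \<le> n \<and> 3^Suc w dvd j)"
          hence "R j = 0" unfolding R_def by (simp only: if_False)
          thus False using False by simp
        qed
        hence "3^Suc w dvd j" by simp
        hence "S (a*3^w) j = (if h = j + a*3^w then 1 else 0)" unfolding S_def by (rule shift[OF ch a])
        moreover have "(h = j + a*3^w) = (j = h - a*3^w \<and> a*3^w \<le> h)" by auto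
        ultimately show ?thesis by auto
      qed
    qed
    have sh: "\<And>a. a < 3 \<Longrightarrow> (\<Sum>j\<le>n. R j * S (a*3^w) j) = (if a*3^w \<le> h then R (h - a*3^w) else 0)"
    proof -
      fix a :: nat assume a: "a < 3"
      have s1: "(\<Sum>j\<le>n. R j * S (a*3^w) j) = (\<Sum>j\<le>n. if j = h - a*3^w then (if a*3^w \<le> h then R j else 0) else 0)"
        using pt[OF a] by (intro sum.cong) simp_all
      have hn0: "h - a*3^w \<le> n" using True by simp
      have s2: "(\<Sum>j\<le>n. if j = h - a*3^w then (if a*3^w \<le> h then R j else 0) else 0) = (if h - a*3^w \<in> {..n} then (if a*3^w \<le> h then R (h - a*3^w) else 0) else 0)"
        by (rule sum.delta) simp
      have s3: "(if h - a*3^w \<in> {..n} then (if a*3^w \<le> h then R (h - a*3^w) else 0) else 0) = (if a*3^w \<le> h then R (h - a*3^w) else 0)" using hn0 by simp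
      from s1 s2 s3 show "(\<Sum>j\<le>n. R j * S (a*3^w) j) = (if a*3^w \<le> h then R (h - a*3^w) else 0)" by simp
    qed
    have e1: "smult_alg m n (efactor n m g w) R h = (\<Sum>a<3. F w a * (\<Sum>j\<le>n. R j * S (a*3^w) j))"
    proof -
      have "smult_alg m n (efactor n m g w) R h = (\<Sum>i\<le>n. \<Sum>j\<le>n. efactor n m g w i * R j * S i j)"
        unfolding smult_alg_def S_def using True by simp
      also have "\<dots> = (\<Sum>i\<le>n. \<Sum>a<3. if i = a*3^w then F w a * (\<Sum>j\<le>n. R j * S i j) else 0)"
      proof (rule sum.cong[OF refl])
        fix i
        have "(\<Sum>j\<le>n. efactor n m g w i * R j * S i j) = efactor n m g w i * (\<Sum>j\<le>n. R j * S i j)"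
          by (simp add: sum_distrib_left mult.assoc)
        also have "\<dots> = (\<Sum>a<3. if i = a*3^w then F w a * (\<Sum>j\<le>n. R j * S i j) else 0)"
          unfolding ef sum_distrib_right by (intro sum.cong refl) simp
        finally show "(\<Sum>j\<le>n. efactor n m g w i * R j * S i j) = (\<Sum>a<3. if i = a*3^w then F w a * (\<Sum>j\<le>n. R j * S i j) else 0)" .
      qed
      also have "\<dots> = (\<Sum>a<3. \<Sum>i\<le>n. if i = a*3^w then F w a * (\<Sum>j\<le>n. R j * S i j) else 0)"
        by (rule sum.swap)
      also have "\<dots> = (\<Sum>a<3. F w a * (\<Sum>j\<le>n. R j * S (a*3^w) j))"
      proof (rule sum.cong[OF refl])
        fix a assume "a \<in> {..<3::nat}"
        hence "a*3^w \<le> 2*3^w" by simp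
        hence "a*3^w \<le> n" using tw by linarith
        thus "(\<Sum>i\<le>n. if i = a*3^w then F w a * (\<Sum>j\<le>n. R j * S i j) else 0) = F w a * (\<Sum>j\<le>n. R j * S (a*3^w) j)"
          by simp
      qed
      finally show ?thesis .
    qed
    have T: "\<And>a. a<3 \<Longrightarrow> (if a*3^w \<le> h then R (h - a*3^w) else 0) = (if 3^w dvd h \<and> digit3 h w = a then Q else 0)"
    proof -
      fix a :: nat assume a: "a<3"
      show "(if a*3^w \<le> h then R (h - a*3^w) else 0) = (if 3^w dvd h \<and> digit3 h w = a then Q else 0)"
      proof (cases "a*3^w \<le> h")
        case le: True
        have hn: "h - a*3^w \<le> n" using True by simp
        have D: "(3^Suc w dvd (h - a*3^w)) = (3^w dvd h \<and> digit3 h w = a)" by (rule D1[OF a le])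
        show ?thesis
        proof (cases "3^w dvd h \<and> digit3 h w = a")
          case c: True
          have "(\<Prod>v\<in>{Suc w..u}. F v (digit3 (h - a*3^w) v)) = Q"
            unfolding Q_def
          proof (rule prod.cong[OF refl])
            fix v assume "v \<in> {Suc w..u}"
            hence "w < v" by simp
            thus "F v (digit3 (h - a*3^w) v) = F v (digit3 h v)" using D2[of w h v] c by simp
          qed
          moreover have dv: "3^Suc w dvd (h - a*3^w)" using D c by blast
          ultimately have "R (h - a*3^w) = Q" by (simp only: R_def hn dv simp_thms if_True)
          thus ?thesis using le c by (simp only: if_True if_False simp_thms)
        next
          case c: False
          have nd: "\<not> 3^Suc w dvd (h - a*3^w)" using D c by blast
          have "R (h - a*3^w) = 0" by (simp only: R_def nd simp_thms if_False)
          thus ?thesis using le c by (simp only: if_True if_False simp_thms)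
        qed
      next
        case nle: False
        have "\<not> (3^w dvd h \<and> digit3 h w = a)"
        proof
          assume "3^w dvd h \<and> digit3 h w = a"
          hence "a * 3^w \<le> h" using D3[of w h] by simp
          thus False using nle by simp
        qed
        thus ?thesis using nle by auto
      qed
    qed
    have dl: "digit3 h w < 3" unfolding digit3_def by simp
    have "smult_alg m n (efactor n m g w) R h = (\<Sum>a<3. F w a * (if a*3^w \<le> h then R (h - a*3^w) else 0))"
      unfolding e1 using sh by (intro sum.cong) simp_all
    also have "\<dots> = (\<Sum>a<3. if digit3 h w = a then (if 3^w dvd h then F w a * Q else 0) else 0)"
      using T by (intro sum.cong) simp_all
    also have "\<dots> = (if 3^w dvd h then F w (digit3 h w) * Q else 0)"
      using dl by simp
    also have "\<dots> = (if h \<le> n \<and> 3^w dvd h then (\<Prod>v\<in>{w..u}. F v (digit3 h v)) else 0)"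
      using True w unfolding Q_def by (simp add: prod.atLeast_Suc_atMost)
    finally show ?thesis .
  qed
qed



lemma FOLD:
  fixes m g n u :: nat
  assumes ch: "CHAR('a::comm_ring_1) = 3" and n: "n = 3^Suc u - 1"
  defines "F \<equiv> \<lambda>v a. (of_nat (phiN (digit3 g v) (digit3 (m+2*g) v) a) :: 'a)"
  shows "w \<le> Suc u \<Longrightarrow> foldr (\<lambda>v acc. smult_alg m n (efactor n m g v) acc) [w..<Suc u] (sone n)
     = (\<lambda>h. if h \<le> n \<and> 3^w dvd h then (\<Prod>v\<in>{w..u}. F v (digit3 h v)) else 0)"
proof (induction "Suc u - w" arbitrary: w)
  case 0
  hence w: "w = Suc u" by simp
  show ?case
  proof
    fix h :: nat
    have lt: "n < 3^Suc u" unfolding n by simp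
    have "(h \<le> n \<and> 3^Suc u dvd h) = (h = 0)"
    proof
      assume a: "h \<le> n \<and> 3^Suc u dvd h"
      show "h = 0"
      proof (rule ccontr)
        assume "h \<noteq> 0"
        hence "3^Suc u \<le> h" using a dvd_imp_le by blast
        thus False using a lt by simp
      qed
    qed simp
    thus "foldr (\<lambda>v acc. smult_alg m n (efactor n m g v) acc) [w..<Suc u] (sone n) h
       = (if h \<le> n \<and> 3^w dvd h then (\<Prod>v\<in>{w..u}. F v (digit3 h v)) else 0)"
      using w by (simp add: sone_def sbasis_def)
  qed
next
  case (Suc d)
  have w: "w \<le> u" using Suc.hyps(2) by simp
  have d: "d = Suc u - Suc w" using Suc.hyps(2) by simp
  have up: "[w..<Suc u] = w # [Suc w..<Suc u]" using w by (simp add: upt_conv_Cons)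
  have IH: "foldr (\<lambda>v acc. smult_alg m n (efactor n m g v) acc) [Suc w..<Suc u] (sone n)
     = (\<lambda>h. if h \<le> n \<and> 3^Suc w dvd h then (\<Prod>v\<in>{Suc w..u}. F v (digit3 h v)) else 0)"
    using Suc.hyps(1)[OF d] w by simp
  show ?case unfolding up foldr.simps o_def IH unfolding F_def
    by (rule STEP[OF ch n w])
qed

theorem proposition5p1:
  fixes m g u :: nat
  assumes "CHAR('a::field) = 3"
    and "\<not> (3 dvd ((m + 2 * g) choose g))"
  shows "smult_alg m (3 ^ (u + 1) - 1) (e_le (3 ^ (u + 1) - 1) m g u :: nat \<Rightarrow> 'a)
           (e_le (3 ^ (u + 1) - 1) m g u)
         = e_le (3 ^ (u + 1) - 1) m g u"
proof -
  note ch = assms(1)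
  define n where "n = (3::nat) ^ (u + 1) - 1"
  have n: "n = 3^Suc u - 1" unfolding n_def by simp
  have p: "0 < (3::nat)^Suc u" by simp
  have hn: "\<And>h. (h \<le> n) = (h < 3^Suc u)"
  proof -
    fix h :: nat
    show "(h \<le> n) = (h < 3^Suc u)" unfolding n using p by linarith
  qed
  have Eform: "(e_le n m g u :: nat \<Rightarrow> 'a) = PhiF (Suc u) m g"
  proof
    fix h :: nat
    have "(e_le n m g u :: nat \<Rightarrow> 'a) h = (if h \<le> n \<and> 3^0 dvd h then (\<Prod>v\<in>{0..u}. (of_nat (phiN (digit3 g v) (digit3 (m+2*g) v) (digit3 h v)) :: 'a)) else 0)"
      unfolding e_le_def using FOLD[OF ch n, of 0] by simp
    also have "\<dots> = PhiF (Suc u) m g h"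
      unfolding PhiF_prod[of "Suc u" m g h] hn by (simp add: atLeast0AtMost lessThan_Suc_atMost)
    finally show "(e_le n m g u :: nat \<Rightarrow> 'a) h = PhiF (Suc u) m g h" .
  qed
  have "smult_alg m n (PhiF (Suc u) m g :: nat \<Rightarrow> 'a) (PhiF (Suc u) m g) = PhiF (Suc u) m g"
  proof
    fix h :: nat
    show "smult_alg m n (PhiF (Suc u) m g :: nat \<Rightarrow> 'a) (PhiF (Suc u) m g) h = PhiF (Suc u) m g h"
    proof (cases "h \<le> n")
      case True
      have sets: "{..n} = {..<3^Suc u}" using hn by auto
      show ?thesis unfolding smult_alg_def sets using True IDEM[OF ch assms(2), of h "Suc u"] hn
        by (simp add: ac_simps)
    next
      case False
      have "3^Suc u \<le> h" using hn[of h] False by simp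
      hence z: "(PhiF (Suc u) m g h :: 'a) = 0" by (rule PhiF_zero)
      show ?thesis unfolding smult_alg_def z using False by simp
    qed
  qed
  thus ?thesis unfolding n_def[symmetric] Eform .
qed


end
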